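(* Let $\Gamma$ be a finite undirected simple graph with vertices $x_1,\dots,x_n$ and edge set $E$, let $G_\Gamma$ be the associated group with commutator generators $y_1,\dots,y_N$ (notation as in the context). For any $z_1,\dots,z_n,t_1,\dots,t_N\in\mathbb{Z}$, \[h\Big(Z_{G_\Gamma}\Big(\prod_{i=1}^n x_i^{z_i}\prod_{l=1}^N y_l^{t_l}\Big)\Big)\le \min\Big\{n-1,\ \min_{\substack{i\in\{1,\dots,n\}\\ z_i\neq 0}}\deg(x_i)\Big\}+N+1,\] where $Z_{G_\Gamma}(g)$ is the centralizer of $g$, $h$ is the Hirsch number, and the inner minimum over an empty index set is interpreted as $+\infty$.
   Context: For a finite undirected simple graph $\Gamma$ with vertex set $\{x_1,\dots,x_n\}$ and edge set $E$, the group $G_\Gamma$ is defined by the presentation with generators $x_1,\dots,x_n$ and $y_{i,j}$ for each pair $i<j$ with $x_ix_j\notin E$, and relations $[x_j,x_i]=1$ if $x_ix_j\in E$; $[x_j,x_i]=y_{i,j}$ if $x_ix_j\notin E$ and $i<j$; and $[x_l,y_{i,j}]=1$ for all $l$ and all such $y_{i,j}$. Let $N$ be the number of pairs $i<j$ with $x_ix_j\notin E$, and enumerate the $y_{i,j}$ as $y_1,\dots,y_N$. Every element of $G_\Gamma$ is uniquely of the form $x_1^{z_1}\cdots x_n^{z_n}y_1^{t_1}\cdots y_N^{t_N}$. The Hirsch number $h(G)$ of a finitely generated nilpotent group $G$ is the number of infinite cyclic factors in any subnormal series of $G$ with cyclic factors. *)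

theory Defs
  imports "HOL-Algebra.Algebra"
begin

text \<open>The graph Gamma has vertex set {0..<n} (vertex i stands for x_(i+1)) and a
symmetric irreflexive edge relation E on it.\<close>

definition simple_graph :: "nat \<Rightarrow> (nat \<Rightarrow> nat \<Rightarrow> bool) \<Rightarrow> bool" where
  "simple_graph n E \<longleftrightarrow> (\<forall>i j. E i j \<longrightarrow> i < n \<and> j < n \<and> i \<noteq> j \<and> E j i)"

text \<open>Non-edges i<j: these index the generators y_(i,j).\<close>
definition nonedges :: "nat \<Rightarrow> (nat \<Rightarrow> nat \<Rightarrow> bool) \<Rightarrow> (nat \<times> nat) set" where
  "nonedges n E = {(i, j). i < j \<and> j < n \<and> \<not> E i j}"

definition vdeg :: "nat \<Rightarrow> (nat \<Rightarrow> nat \<Rightarrow> bool) \<Rightarrow> nat \<Rightarrow> nat" where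
  "vdeg n E i = card {j. j < n \<and> E i j}"

text \<open>Concrete model of G_Gamma via normal forms: the pair (z, t) represents
  x_1^z_1 ... x_n^z_n * prod y_(i,j)^t(i,j).  With the commutator convention
  [a,b] = a^-1 b^-1 a b, the relation [x_j,x_i] = y_(i,j) gives
  x_j x_i = x_i x_j y_(i,j), whence the multiplication below.\<close>

definition GG :: "nat \<Rightarrow> (nat \<Rightarrow> nat \<Rightarrow> bool)
     \<Rightarrow> ((nat \<Rightarrow> int) \<times> (nat \<times> nat \<Rightarrow> int)) monoid" where
  "GG n E = \<lparr> carrier = {(z, t). (\<forall>i. n \<le> i \<longrightarrow> z i = 0) \<and>
                                   (\<forall>p. p \<notin> nonedges n E \<longrightarrow> t p = 0)},
             monoid.mult = (\<lambda>a b.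
                 (\<lambda>i. fst a i + fst b i,
                  \<lambda>p. snd a p + snd b p +
                     (if p \<in> nonedges n E then fst a (snd p) * fst b (fst p) else 0))),
             one = (\<lambda>_. 0, \<lambda>_. 0) \<rparr>"

definition centralizer :: "('a, 'b) monoid_scheme \<Rightarrow> 'a \<Rightarrow> 'a set" where
  "centralizer G g = {h \<in> carrier G. h \<otimes>\<^bsub>G\<^esub> g = g \<otimes>\<^bsub>G\<^esub> h}"

definition cyclic_group :: "('a, 'b) monoid_scheme \<Rightarrow> bool" where
  "cyclic_group Q \<longleftrightarrow> (\<exists>a \<in> carrier Q. carrier Q = generate Q {a})"

definition cyclic_series ::
    "('a, 'b) monoid_scheme \<Rightarrow> 'a set \<Rightarrow> nat \<Rightarrow> (nat \<Rightarrow> 'a set) \<Rightarrow> bool" where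
  "cyclic_series G H k S \<longleftrightarrow>
     S 0 = H \<and> S k = {\<one>\<^bsub>G\<^esub>} \<and>
     (\<forall>i\<le>k. subgroup (S i) G) \<and>
     (\<forall>i<k. S (Suc i) \<subseteq> S i \<and>
            S (Suc i) \<lhd> (G\<lparr>carrier := S i\<rparr>) \<and>
            cyclic_group ((G\<lparr>carrier := S i\<rparr>) Mod S (Suc i)))"

definition num_infinite_factors ::
    "('a, 'b) monoid_scheme \<Rightarrow> nat \<Rightarrow> (nat \<Rightarrow> 'a set) \<Rightarrow> nat" where
  "num_infinite_factors G k S =
     card {i. i < k \<and> infinite (carrier ((G\<lparr>carrier := S i\<rparr>) Mod S (Suc i)))}"

end

theory Submission
  imports Defs
begin

locale addhom = group G for G (structure) +
  fixes f :: "'a \<Rightarrow> int"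
  assumes add: "\<lbrakk>a\<in>carrier G; b\<in>carrier G\<rbrakk> \<Longrightarrow> f (a\<otimes>b) = f a + f b"
begin

lemma addhom_one:
  shows "f \<one> = 0"
  using add[of \<one> \<one>] by simp

lemma addhom_inv:
  assumes x: "x \<in> carrier G"
  shows "f (inv x) = - f x"
  using add[of "inv x" x] x addhom_one by simp

lemma addhom_nat_pow:
  assumes x: "x \<in> carrier G"
  shows "f (x [^] (m::nat)) = int m * f x"
proof (induction m)
  case 0 then show ?case using addhom_one by simp
next
  case (Suc m) then show ?case using add[of "x [^] m" x] x by (simp add: algebra_simps)
qed

lemma addhom_int_pow:
  assumes x: "x \<in> carrier G"
  shows "f (x [^] (k::int)) = k * f x"
proof (cases "k < 0")
  case True
  then have "k = - int (nat (-k))" by simp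
  then obtain j :: nat where j: "k = - int j" by blast
  have "f (x [^] k) = f (inv (x [^] j))" unfolding j using x by (simp only: int_pow_neg_int)
  also have "\<dots> = - f (x [^] j)" using x by (intro addhom_inv) simp
  also have "\<dots> = k * f x" unfolding j addhom_nat_pow[OF x] by simp
  finally show ?thesis .
next
  case False
  then have "k = int (nat k)" by simp
  then obtain j :: nat where j: "k = int j" by blast
  have "f (x [^] k) = f (x [^] j)" unfolding j by (simp only: int_pow_int)
  also have "\<dots> = k * f x" unfolding j addhom_nat_pow[OF x] by simp
  finally show ?thesis .
qed

lemma addhom_kernel_subgroup:
  shows "subgroup {h\<in>carrier G. f h = 0} G"
proof (rule subgroupI)
  show "{h \<in> carrier G. f h = 0} \<subseteq> carrier G" by blast
  show "{h \<in> carrier G. f h = 0} \<noteq> {}" using addhom_one one_closed by blast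
  fix a assume a: "a \<in> {h \<in> carrier G. f h = 0}"
  then show "inv a \<in> {h \<in> carrier G. f h = 0}" using addhom_inv[ of a] by simp
  fix b assume b: "b \<in> {h \<in> carrier G. f h = 0}"
  then show "a \<otimes> b \<in> {h \<in> carrier G. f h = 0}" using a add[of a b] by simp
qed

lemma addhom_kernel_normal:
  shows "{h\<in>carrier G. f h = 0} \<lhd> G"
  unfolding normal_inv_iff
proof (intro conjI ballI)
  show "subgroup {h\<in>carrier G. f h = 0} G" by (rule addhom_kernel_subgroup)
  fix x h assume x: "x \<in> carrier G" and h: "h \<in> {h\<in>carrier G. f h = 0}"
  have "f (x \<otimes> h \<otimes> inv x) = f x + f h + f (inv x)" using x h add by simp
  also have "\<dots> = 0" using x h addhom_inv[OF x] by simp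
  finally show "x \<otimes> h \<otimes> inv x \<in> {h\<in>carrier G. f h = 0}" using x h by simp
qed

lemma addhom_gen:
  shows "\<exists>a\<in>carrier G. \<forall>h\<in>carrier G. f a dvd f h"
proof (cases "\<exists>h\<in>carrier G. f h \<noteq> 0")
  case False
  then show ?thesis by auto
next
  case True
  then obtain h where h: "h \<in> carrier G" "f h \<noteq> 0" by auto
  define P where "P = (\<lambda>m::nat. m > 0 \<and> (\<exists>h\<in>carrier G. f h = int m))"
  have "\<exists>m. P m"
  proof (cases "f h > 0")
    case True then show ?thesis unfolding P_def using h by (intro exI[of _ "nat (f h)"]) auto
  next
    case False then show ?thesis unfolding P_def using h addhom_inv[OF h(1)]
      by (intro exI[of _ "nat (- f h)"]) (auto intro!: bexI[of _ "inv h"])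
  qed
  then have Pd: "P (LEAST m. P m)" by (rule LeastI_ex)
  define d where "d = (LEAST m. P m)"
  from Pd obtain a where a: "a \<in> carrier G" "f a = int d" "d > 0" unfolding P_def d_def by auto
  show ?thesis
  proof (intro bexI[OF _ a(1)] ballI)
    fix g assume g: "g \<in> carrier G"
    define q where "q = f g div int d"
    define r where "r = f g mod int d"
    have "f (g \<otimes> inv (a [^] q)) = f g - q * int d"
      using g a add addhom_inv addhom_int_pow by simp
    also have "\<dots> = r" unfolding q_def r_def by (simp add: minus_div_mult_eq_mod)
    finally have fr: "f (g \<otimes> inv (a [^] q)) = r" .
    have r0: "r \<ge> 0" "r < int d" unfolding r_def using a by auto
    have "r = 0"
    proof (rule ccontr)
      assume "r \<noteq> 0"
      then have "P (nat r)" unfolding P_def using r0 fr g a(1)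
        by (auto intro!: bexI[of _ "g \<otimes> inv (a [^] q)"])
      then have "d \<le> nat r" unfolding d_def by (rule Least_le)
      then show False using r0 by simp
    qed
    then show "f a dvd f g" using a(2) unfolding r_def by auto
  qed
qed

lemma addhom_cyclic:
  shows "cyclic_group (G Mod {h\<in>carrier G. f h = 0})"
proof -
  define K where "K = {h\<in>carrier G. f h = 0}"
  have nK: "K \<lhd> G" unfolding K_def by (rule addhom_kernel_normal)
  interpret N: normal K G by (rule nK)
  interpret Q: group "G Mod K" by (rule N.factorgroup_is_group)
  obtain a where a: "a \<in> carrier G" "\<forall>h\<in>carrier G. f a dvd f h" using addhom_gen by blast
  have aQ: "K #> a \<in> carrier (G Mod K)" using a by (simp add: carrier_FactGroup)
  have "carrier (G Mod K) \<subseteq> generate (G Mod K) {K #> a}"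
  proof
    fix Y assume "Y \<in> carrier (G Mod K)"
    then obtain h where h: "h \<in> carrier G" "Y = K #> h" by (auto simp: carrier_FactGroup)
    obtain j where j: "f h = f a * j" using a h by (auto elim: dvdE)
    have "a [^] j \<otimes> inv h \<in> K" unfolding K_def
      using a h add addhom_inv addhom_int_pow j by (simp add: algebra_simps)
    then have "(a [^] j \<otimes> inv h) \<otimes> h \<in> K #> h" using h N.subset by (intro rcosI) auto
    then have "a [^] j \<in> K #> h" using h a by (simp add: m_assoc)
    then have "K #> h = K #> (a [^] j)" by (rule repr_independence[OF _ h(1) N.subgroup_axioms])
    also have "\<dots> = (K #> a) [^]\<^bsub>G Mod K\<^esub> j" using N.FactGroup_int_pow[OF a(1)] by simp
    finally have "Y = (K #> a) [^]\<^bsub>G Mod K\<^esub> j" using h by simp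
    then show "Y \<in> generate (G Mod K) {K #> a}" using Q.generate_pow[OF aQ] by auto
  qed
  moreover have "generate (G Mod K) {K #> a} \<subseteq> carrier (G Mod K)"
    using aQ by (intro Q.generate_incl) auto
  ultimately have eq: "carrier (G Mod K) = generate (G Mod K) {K #> a}" by (rule equalityI)
  have "cyclic_group (G Mod K)" unfolding cyclic_group_def by (rule bexI[where x="K #> a"]) (fact eq, fact aQ)
  then show ?thesis unfolding K_def .
qed

end

lemma (in group) cyclic_torsion_finite:
  assumes cyc: "cyclic_group G" and tor: "\<forall>x\<in>carrier G. \<exists>m::nat. m > 0 \<and> x [^] m = \<one>"
  shows "finite (carrier G)"
proof -
  obtain a where a: "a \<in> carrier G" "carrier G = generate G {a}" using cyc unfolding cyclic_group_def by blast
  obtain m :: nat where m: "m > 0" "a [^] m = \<one>" using tor a(1) by blast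
  have "carrier G \<subseteq> (\<lambda>k. a [^] k) ` {0..<int m}"
  proof
    fix x assume "x \<in> carrier G"
    then obtain k :: int where k: "x = a [^] k" using a generate_pow[OF a(1)] by auto
    have "a [^] k = a [^] (int m * (k div int m) + k mod int m)" by simp
    also have "\<dots> = a [^] (int m * (k div int m)) \<otimes> a [^] (k mod int m)"
      by (rule int_pow_mult[OF a(1)])
    also have "\<dots> = (a [^] int m) [^] (k div int m) \<otimes> a [^] (k mod int m)"
      by (simp add: int_pow_pow[OF a(1)])
    also have "\<dots> = a [^] (k mod int m)" using m a(1) by (simp add: int_pow_int)
    finally show "x \<in> (\<lambda>k. a [^] k) ` {0..<int m}" using k m by auto
  qed
  then show ?thesis by (rule finite_subset) auto
qed

lemma (in normal) pow_shift:
  assumes x: "x \<in> carrier G" and k: "k \<in> H"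
  shows "\<exists>k'\<in>H. (x \<otimes> k) [^] (m::nat) = x [^] m \<otimes> k'"
proof (induction m)
  case 0 then show ?case by (auto intro: bexI[of _ \<one>])
next
  case (Suc m)
  then obtain k' where k': "k' \<in> H" "(x \<otimes> k) [^] m = x [^] m \<otimes> k'" by blast
  have kc: "k \<in> carrier G" "k' \<in> carrier G" using k k' by auto
  have "(x \<otimes> k) [^] Suc m = x [^] m \<otimes> k' \<otimes> (x \<otimes> k)" using k' by simp
  also have "\<dots> = x [^] Suc m \<otimes> ((inv x \<otimes> k' \<otimes> x) \<otimes> k)"
  proof -
    have e: "x [^] m \<otimes> x \<otimes> inv x = x [^] m" using x by (simp add: m_assoc)
    show ?thesis using x kc by (simp add: m_assoc[symmetric] e)
  qed
  finally have eq: "(x \<otimes> k) [^] Suc m = x [^] Suc m \<otimes> ((inv x \<otimes> k' \<otimes> x) \<otimes> k)" .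
  have "(inv x \<otimes> k' \<otimes> x) \<otimes> k \<in> H"
    using inv_op_closed1[OF x k'(1)] k subgroup.m_closed[OF subgroup_axioms] by auto
  with eq show ?case by (intro bexI)
qed


section \<open>The concrete group\<close>

lemma carrier_GG: "carrier (GG n E) = {(z, t). (\<forall>i. n \<le> i \<longrightarrow> z i = 0) \<and> (\<forall>p. p \<notin> nonedges n E \<longrightarrow> t p = 0)}"
  by (simp add: GG_def)

lemma carrier_GG_iff: "h \<in> carrier (GG n E) \<longleftrightarrow>
   (\<forall>i. n \<le> i \<longrightarrow> fst h i = 0) \<and> (\<forall>p. p \<notin> nonedges n E \<longrightarrow> snd h p = 0)"
  by (cases h) (simp add: carrier_GG)

lemma mult_GG: "a \<otimes>\<^bsub>GG n E\<^esub> b = (\<lambda>i. fst a i + fst b i,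
   \<lambda>p. snd a p + snd b p + (if p \<in> nonedges n E then fst a (snd p) * fst b (fst p) else 0))"
  by (simp add: GG_def)

lemma one_GG: "\<one>\<^bsub>GG n E\<^esub> = (\<lambda>_. 0, \<lambda>_. 0)"
  by (simp add: GG_def)

lemma group_GG: "group (GG n E)"
proof (rule groupI)
  fix x y assume "x \<in> carrier (GG n E)" "y \<in> carrier (GG n E)"
  then show "x \<otimes>\<^bsub>GG n E\<^esub> y \<in> carrier (GG n E)"
    by (cases x, cases y) (auto simp: carrier_GG mult_GG)
next
  show "\<one>\<^bsub>GG n E\<^esub> \<in> carrier (GG n E)" by (simp add: carrier_GG one_GG)
next
  fix x y z
  show "x \<otimes>\<^bsub>GG n E\<^esub> y \<otimes>\<^bsub>GG n E\<^esub> z = x \<otimes>\<^bsub>GG n E\<^esub> (y \<otimes>\<^bsub>GG n E\<^esub> z)"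
    by (auto simp: mult_GG fun_eq_iff algebra_simps)
next
  fix x assume "x \<in> carrier (GG n E)"
  then show "\<one>\<^bsub>GG n E\<^esub> \<otimes>\<^bsub>GG n E\<^esub> x = x"
    by (cases x) (auto simp: mult_GG one_GG)
next
  fix x assume x: "x \<in> carrier (GG n E)"
  obtain z t where zt: "x = (z, t)" by (cases x)
  define y where "y = ((\<lambda>i. - z i), (\<lambda>p. - t p + (if p \<in> nonedges n E then z (snd p) * z (fst p) else 0)))"
  have "y \<in> carrier (GG n E)" using x unfolding zt y_def by (auto simp: carrier_GG)
  moreover have "y \<otimes>\<^bsub>GG n E\<^esub> x = \<one>\<^bsub>GG n E\<^esub>"
    unfolding zt y_def by (auto simp: mult_GG one_GG fun_eq_iff)
  ultimately show "\<exists>y\<in>carrier (GG n E). y \<otimes>\<^bsub>GG n E\<^esub> x = \<one>\<^bsub>GG n E\<^esub>" by blast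
qed

lemma (in group) centralizer_subgroup:
  assumes g: "g \<in> carrier G"
  shows "subgroup (centralizer G g) G"
proof (rule subgroupI)
  show "centralizer G g \<subseteq> carrier G" unfolding centralizer_def by blast
  show "centralizer G g \<noteq> {}" unfolding centralizer_def using g by auto
next
  fix h assume "h \<in> centralizer G g"
  then have h: "h \<in> carrier G" and hg: "h \<otimes> g = g \<otimes> h" unfolding centralizer_def by auto
  have "h \<otimes> (g \<otimes> inv h) = (h \<otimes> g) \<otimes> inv h" using h g by (simp add: m_assoc)
  also have "\<dots> = g \<otimes> (h \<otimes> inv h)" using h g hg by (simp add: m_assoc)
  also have "\<dots> = g" using h g by simp
  finally have "g \<otimes> inv h = inv h \<otimes> g"
    using inv_solve_left[of "g \<otimes> inv h" h g] h g by auto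
  then show "inv h \<in> centralizer G g" unfolding centralizer_def using h by auto
next
  fix a b assume "a \<in> centralizer G g" "b \<in> centralizer G g"
  then have a: "a \<in> carrier G" "a \<otimes> g = g \<otimes> a" and b: "b \<in> carrier G" "b \<otimes> g = g \<otimes> b"
    unfolding centralizer_def by auto
  have "a \<otimes> b \<otimes> g = a \<otimes> (b \<otimes> g)" using a b g by (simp add: m_assoc)
  also have "\<dots> = (a \<otimes> g) \<otimes> b" using a b g by (simp add: m_assoc[symmetric])
  also have "\<dots> = (g \<otimes> a) \<otimes> b" using a b g by simp
  also have "\<dots> = g \<otimes> (a \<otimes> b)" using a b g by (simp add: m_assoc)
  finally show "a \<otimes> b \<in> centralizer G g" unfolding centralizer_def using a b by auto
qed

section \<open>Coordinates\<close>

definition ps :: "nat \<Rightarrow> (nat \<Rightarrow> nat \<Rightarrow> bool) \<Rightarrow> (nat \<times> nat) list" where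
  "ps n E = (SOME l. distinct l \<and> set l = nonedges n E)"

definition cc :: "nat \<Rightarrow> (nat \<Rightarrow> nat \<Rightarrow> bool) \<Rightarrow> nat \<Rightarrow> (nat \<Rightarrow> int) \<times> (nat \<times> nat \<Rightarrow> int) \<Rightarrow> int" where
  "cc n E i h = (if i < n then fst h i else snd h (ps n E ! (i - n)))"

definition DD :: "nat \<Rightarrow> (nat \<Rightarrow> nat \<Rightarrow> bool) \<Rightarrow> nat" where
  "DD n E = n + card (nonedges n E)"

definition ZZ where
  "ZZ n E i = {h \<in> carrier (GG n E). \<forall>l<i. cc n E l h = 0}"

definition act where
  "act n E H = {i. i < DD n E \<and> (\<exists>h\<in>H \<inter> ZZ n E i. cc n E i h \<noteq> 0)}"

lemma fin_ne: "finite (nonedges n E)"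
  by (rule finite_subset[of _ "{..<n} \<times> {..<n}"]) (auto simp: nonedges_def)

lemma ps: "distinct (ps n E) \<and> set (ps n E) = nonedges n E"
  unfolding ps_def by (rule someI_ex) (metis finite_distinct_list fin_ne)

lemma length_ps: "length (ps n E) = card (nonedges n E)"
  using ps[of n E] distinct_card by metis

lemma ZZ_Suc: "ZZ n E (Suc i) = {h \<in> ZZ n E i. cc n E i h = 0}"
  by (auto simp: ZZ_def less_Suc_eq)

lemma ZZ_0: "ZZ n E 0 = carrier (GG n E)"
  by (simp add: ZZ_def)

lemma ZZ_anti: "i \<le> j \<Longrightarrow> ZZ n E j \<subseteq> ZZ n E i"
  by (auto simp: ZZ_def)

lemma ZZ_carrier: "ZZ n E i \<subseteq> carrier (GG n E)"
  by (auto simp: ZZ_def)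

lemma fst_zero:
  assumes a: "a \<in> ZZ n E l" and l: "n \<le> l"
  shows "fst a = (\<lambda>_. 0)"
proof
  fix j show "fst a j = 0"
  proof (cases "j < n")
    case True
    then have "cc n E j a = 0" using a l unfolding ZZ_def by auto
    then show ?thesis using True by (simp add: cc_def)
  next
    case False
    then show ?thesis using a unfolding ZZ_def carrier_GG_iff by auto
  qed
qed

lemma cc_add:
  assumes a: "a \<in> ZZ n E l"
  shows "cc n E l (a \<otimes>\<^bsub>GG n E\<^esub> b) = cc n E l a + cc n E l b"
proof (cases "l < n")
  case True then show ?thesis by (simp add: cc_def mult_GG)
next
  case False
  then have "fst a = (\<lambda>_. 0)" using fst_zero[OF a] by simp
  then show ?thesis using False by (simp add: cc_def mult_GG)
qed

lemma cc_one: "cc n E l \<one>\<^bsub>GG n E\<^esub> = 0"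
  by (simp add: cc_def one_GG)

lemma ZZ_closed: "a \<in> ZZ n E i \<Longrightarrow> b \<in> ZZ n E i \<Longrightarrow> a \<otimes>\<^bsub>GG n E\<^esub> b \<in> ZZ n E i"
proof (induction i)
  case 0 then show ?case using group.is_monoid[OF group_GG] by (simp add: ZZ_0 monoid.m_closed)
next
  case (Suc i)
  then have ai: "a \<in> ZZ n E i" "b \<in> ZZ n E i" "cc n E i a = 0" "cc n E i b = 0" by (auto simp: ZZ_Suc)
  then show ?case using Suc.IH cc_add[OF ai(1)] by (simp add: ZZ_Suc)
qed

lemma ZZ_inv: "a \<in> ZZ n E i \<Longrightarrow> inv\<^bsub>GG n E\<^esub> a \<in> ZZ n E i"
proof (induction i)
  case 0 then show ?case using group.inv_closed[OF group_GG] by (simp add: ZZ_0)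
next
  case (Suc i)
  then have ai: "a \<in> ZZ n E i" "cc n E i a = 0" by (auto simp: ZZ_Suc)
  then have ii: "inv\<^bsub>GG n E\<^esub> a \<in> ZZ n E i" using Suc.IH by blast
  have ac: "a \<in> carrier (GG n E)" using ai ZZ_carrier by blast
  have "cc n E i (inv\<^bsub>GG n E\<^esub> a \<otimes>\<^bsub>GG n E\<^esub> a) = cc n E i (inv\<^bsub>GG n E\<^esub> a)"
    using cc_add[OF ii, of a] ai by simp
  moreover have "inv\<^bsub>GG n E\<^esub> a \<otimes>\<^bsub>GG n E\<^esub> a = \<one>\<^bsub>GG n E\<^esub>"
    using group.l_inv[OF group_GG ac] .
  ultimately have "cc n E i (inv\<^bsub>GG n E\<^esub> a) = 0" using cc_one by metis
  then show ?case using ii by (simp add: ZZ_Suc)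
qed

lemma ZZ_subgroup: "subgroup (ZZ n E i) (GG n E)"
proof (rule group.subgroupI[OF group_GG])
  show "ZZ n E i \<subseteq> carrier (GG n E)" by (rule ZZ_carrier)
  have "\<one>\<^bsub>GG n E\<^esub> \<in> ZZ n E i" unfolding ZZ_def
    using group.is_monoid[OF group_GG] by (simp add: cc_one monoid.one_closed)
  then show "ZZ n E i \<noteq> {}" by blast
qed (auto intro: ZZ_inv ZZ_closed)

lemma ZZ_DD: "ZZ n E (DD n E) = {\<one>\<^bsub>GG n E\<^esub>}"
proof
  show "{\<one>\<^bsub>GG n E\<^esub>} \<subseteq> ZZ n E (DD n E)" using subgroup.one_closed[OF ZZ_subgroup] by simp
  show "ZZ n E (DD n E) \<subseteq> {\<one>\<^bsub>GG n E\<^esub>}"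
  proof
    fix h assume h: "h \<in> ZZ n E (DD n E)"
    have f: "fst h = (\<lambda>_. 0)" using fst_zero[OF h] by (simp add: DD_def)
    have s: "snd h = (\<lambda>_. 0)"
    proof
      fix p show "snd h p = 0"
      proof (cases "p \<in> nonedges n E")
        case True
        then obtain j where j: "j < length (ps n E)" "ps n E ! j = p"
          using ps[of n E] by (metis in_set_conv_nth)
        then have "n + j < DD n E" by (simp add: DD_def length_ps)
        then have "cc n E (n + j) h = 0" using h unfolding ZZ_def by blast
        then show ?thesis using j by (simp add: cc_def)
      next
        case False then show ?thesis using h unfolding ZZ_def carrier_GG_iff by blast
      qed
    qed
    show "h \<in> {\<one>\<^bsub>GG n E\<^esub>}" using f s by (cases h) (simp add: one_GG)
  qed
qed

lemma addhom_ZZ: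
  assumes H: "subgroup H (GG n E)" and HZ: "H \<subseteq> ZZ n E i"
  shows "addhom ((GG n E)\<lparr>carrier := H\<rparr>) (cc n E i)"
  unfolding addhom_def addhom_axioms_def
proof (intro conjI allI impI)
  show "group ((GG n E)\<lparr>carrier := H\<rparr>)" by (rule subgroup.subgroup_is_group[OF H group_GG])
  fix a b assume "a \<in> carrier ((GG n E)\<lparr>carrier := H\<rparr>)" "b \<in> carrier ((GG n E)\<lparr>carrier := H\<rparr>)"
  then have "a \<in> ZZ n E i" using HZ by auto
  then show "cc n E i (a \<otimes>\<^bsub>(GG n E)\<lparr>carrier := H\<rparr>\<^esub> b) = cc n E i a + cc n E i b"
    using cc_add by simp
qed

lemma act_sub: "act n E H \<subseteq> {..<DD n E}"
  by (auto simp: act_def)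

lemma act_finite: "finite (act n E H)"
  by (rule finite_subset[OF act_sub]) simp

lemma act_mono: "H \<subseteq> H' \<Longrightarrow> act n E H \<subseteq> act n E H'"
  by (auto simp: act_def)


lemma torsion:
  assumes H: "subgroup H (GG n E)" and K: "subgroup K (GG n E)" and KH: "K \<subseteq> H"
    and nK: "K \<lhd> (GG n E)\<lparr>carrier := H\<rparr>" and eq: "act n E K = act n E H"
    and g: "g \<in> H"
  shows "\<exists>m::nat. m > 0 \<and> g [^]\<^bsub>GG n E\<^esub> m \<in> K"
proof -
  interpret G: group "GG n E" by (rule group_GG)
  interpret N: normal K "(GG n E)\<lparr>carrier := H\<rparr>" by (rule nK)
  have main: "\<forall>g\<in>H \<inter> ZZ n E i. \<exists>m::nat. m > 0 \<and> g [^]\<^bsub>GG n E\<^esub> m \<in> K" if "i \<le> DD n E" for i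
    using that
  proof (induction i rule: inc_induct)
    case base
    show ?case
    proof
      fix g assume "g \<in> H \<inter> ZZ n E (DD n E)"
      then have "g = \<one>\<^bsub>GG n E\<^esub>" using ZZ_DD by blast
      then show "\<exists>m::nat. m > 0 \<and> g [^]\<^bsub>GG n E\<^esub> m \<in> K"
        using subgroup.one_closed[OF K] by (intro exI[of _ 1]) simp
    qed
  next
    case (step i)
    show ?case
    proof
      fix g assume gi: "g \<in> H \<inter> ZZ n E i"
      show "\<exists>m::nat. m > 0 \<and> g [^]\<^bsub>GG n E\<^esub> m \<in> K"
      proof (cases "cc n E i g = 0")
        case True
        then have "g \<in> H \<inter> ZZ n E (Suc i)" using gi by (simp add: ZZ_Suc)
        then show ?thesis using step.IH by blast
      next
        case False
        then have "i \<in> act n E H" using gi step.hyps by (auto simp: act_def)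
        then have "i \<in> act n E K" using eq by simp
        then obtain k where k: "k \<in> K" "k \<in> ZZ n E i" "cc n E i k \<noteq> 0" by (auto simp: act_def)
        interpret A: addhom "(GG n E)\<lparr>carrier := ZZ n E i\<rparr>" "cc n E i"
          by (rule addhom_ZZ[OF ZZ_subgroup]) simp
        have Zi: "subgroup (ZZ n E i) (GG n E)" by (rule ZZ_subgroup)
        have ccinv: "cc n E i (inv\<^bsub>GG n E\<^esub> x) = - cc n E i x" if "x \<in> ZZ n E i" for x
          using A.addhom_inv[of x] that G.m_inv_consistent[OF Zi that] by simp
        have ccnat: "cc n E i (x [^]\<^bsub>GG n E\<^esub> (m::nat)) = int m * cc n E i x" if "x \<in> ZZ n E i" for x m
          using A.addhom_nat_pow[of x m] that G.nat_pow_consistent[of x m "ZZ n E i"] by simp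
        have ccint: "cc n E i (x [^]\<^bsub>GG n E\<^esub> (m::int)) = m * cc n E i x" if "x \<in> ZZ n E i" for x m
          using A.addhom_int_pow[of x m] that G.int_pow_consistent[OF Zi that, of m] by simp
        define k0 where "k0 = (if cc n E i k > 0 then k else inv\<^bsub>GG n E\<^esub> k)"
        have k0: "k0 \<in> K" "k0 \<in> ZZ n E i" "cc n E i k0 > 0"
          using k ccinv[OF k(2)] subgroup.m_inv_closed[OF K] ZZ_inv unfolding k0_def by auto
        define a where "a = cc n E i k0"
        define b where "b = cc n E i g"
        define x1 where "x1 = g [^]\<^bsub>GG n E\<^esub> (nat a)"
        define x2 where "x2 = k0 [^]\<^bsub>GG n E\<^esub> (- b)"
        have x1H: "x1 \<in> H" unfolding x1_def using G.subgroup_int_pow_closed[OF H, of g "int (nat a)", unfolded int_pow_int] gi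
          by blast
        have x1Z: "x1 \<in> ZZ n E i" unfolding x1_def using G.subgroup_int_pow_closed[OF Zi, of g "int (nat a)", unfolded int_pow_int] gi
          by blast
        have x2K: "x2 \<in> K" unfolding x2_def using G.subgroup_int_pow_closed[OF K k0(1)] .
        have x2Z: "x2 \<in> ZZ n E i" unfolding x2_def using G.subgroup_int_pow_closed[OF Zi k0(2)] .
        define x where "x = x1 \<otimes>\<^bsub>GG n E\<^esub> x2"
        have "cc n E i x = cc n E i x1 + cc n E i x2" unfolding x_def by (rule cc_add[OF x1Z])
        also have "\<dots> = int (nat a) * b + (- b) * a"
          unfolding x1_def x2_def a_def b_def using gi k0 by (simp add: ccnat ccint)
        also have "\<dots> = 0" using k0 unfolding a_def by simp
        finally have "cc n E i x = 0" .
        moreover have "x \<in> H" unfolding x_def using x1H x2K KH subgroup.m_closed[OF H] by blast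
        moreover have "x \<in> ZZ n E i" unfolding x_def using x1Z x2Z by (rule ZZ_closed)
        ultimately have "x \<in> H \<inter> ZZ n E (Suc i)" by (simp add: ZZ_Suc)
        then obtain m :: nat where m: "m > 0" "x [^]\<^bsub>GG n E\<^esub> m \<in> K" using step.IH by blast
        obtain k' where k': "k' \<in> K"
          "(x1 \<otimes>\<^bsub>(GG n E)\<lparr>carrier := H\<rparr>\<^esub> x2) [^]\<^bsub>(GG n E)\<lparr>carrier := H\<rparr>\<^esub> m
            = x1 [^]\<^bsub>(GG n E)\<lparr>carrier := H\<rparr>\<^esub> m \<otimes>\<^bsub>(GG n E)\<lparr>carrier := H\<rparr>\<^esub> k'"
          using N.pow_shift[of x1 x2 m] x1H x2K by auto
        then have xm: "x [^]\<^bsub>GG n E\<^esub> m = x1 [^]\<^bsub>GG n E\<^esub> m \<otimes>\<^bsub>GG n E\<^esub> k'"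
          unfolding x_def using G.nat_pow_consistent[symmetric] by simp
        have k'c: "k' \<in> carrier (GG n E)" using k' K subgroup.subset by blast
        have x1c: "x1 [^]\<^bsub>GG n E\<^esub> m \<in> carrier (GG n E)" using x1H H subgroup.subset by blast
        have "x1 [^]\<^bsub>GG n E\<^esub> m = x [^]\<^bsub>GG n E\<^esub> m \<otimes>\<^bsub>GG n E\<^esub> inv\<^bsub>GG n E\<^esub> k'"
          using xm k'c x1c by (simp add: G.m_assoc)
        then have "x1 [^]\<^bsub>GG n E\<^esub> m \<in> K"
          using m(2) k'(1) subgroup.m_closed[OF K] subgroup.m_inv_closed[OF K] by simp
        moreover have "x1 [^]\<^bsub>GG n E\<^esub> m = g [^]\<^bsub>GG n E\<^esub> (nat a * m)"
          unfolding x1_def using gi ZZ_carrier by (intro G.nat_pow_pow) blast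
        moreover have "nat a * m > 0" using m k0 unfolding a_def by simp
        ultimately show ?thesis by metis
      qed
    qed
  qed
  have "g \<in> H \<inter> ZZ n E 0" using g subgroup.subset[OF H] by (auto simp: ZZ_0)
  then show ?thesis using main[of 0] by blast
qed

lemma quot_finite:
  assumes G: "group G" and H: "subgroup H G" and nK: "K \<lhd> G\<lparr>carrier := H\<rparr>"
    and cyc: "cyclic_group (G\<lparr>carrier := H\<rparr> Mod K)"
    and tor: "\<forall>g\<in>H. \<exists>m::nat. m > 0 \<and> g [^]\<^bsub>G\<^esub> m \<in> K"
  shows "finite (carrier (G\<lparr>carrier := H\<rparr> Mod K))"
proof -
  interpret G: group G by (rule G)
  interpret N: normal K "G\<lparr>carrier := H\<rparr>" by (rule nK)
  interpret Q: group "G\<lparr>carrier := H\<rparr> Mod K" by (rule N.factorgroup_is_group)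
  show ?thesis
  proof (rule Q.cyclic_torsion_finite[OF cyc], intro ballI)
    fix Y assume "Y \<in> carrier (G\<lparr>carrier := H\<rparr> Mod K)"
    then obtain g where g: "g \<in> H" "Y = K #>\<^bsub>G\<lparr>carrier := H\<rparr>\<^esub> g" by (auto simp: carrier_FactGroup)
    obtain m :: nat where m: "m > 0" "g [^]\<^bsub>G\<^esub> m \<in> K" using tor g by blast
    have "Y [^]\<^bsub>G\<lparr>carrier := H\<rparr> Mod K\<^esub> m = K #>\<^bsub>G\<lparr>carrier := H\<rparr>\<^esub> (g [^]\<^bsub>G\<lparr>carrier := H\<rparr>\<^esub> m)"
      using N.FactGroup_pow[of g m] g by simp
    also have "\<dots> = K #>\<^bsub>G\<lparr>carrier := H\<rparr>\<^esub> (g [^]\<^bsub>G\<^esub> m)"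
      using G.nat_pow_consistent[of g m H] by simp
    also have "\<dots> = K" using N.rcos_const[OF N.is_group m(2)] .
    finally show "\<exists>m::nat. m > 0 \<and> Y [^]\<^bsub>G\<lparr>carrier := H\<rparr> Mod K\<^esub> m = \<one>\<^bsub>G\<lparr>carrier := H\<rparr> Mod K\<^esub>"
      using m(1) by auto
  qed
qed

lemma count_le:
  assumes cs: "cyclic_series (GG n E) C k S"
  shows "num_infinite_factors (GG n E) k S \<le> card (act n E C)"
proof -
  let ?inf = "\<lambda>j. infinite (carrier (((GG n E)\<lparr>carrier := S j\<rparr>) Mod S (Suc j)))"
  have S0: "S 0 = C" and sg: "\<And>i. i \<le> k \<Longrightarrow> subgroup (S i) (GG n E)"
    and st: "\<And>i. i < k \<Longrightarrow> S (Suc i) \<subseteq> S i \<and> S (Suc i) \<lhd> ((GG n E)\<lparr>carrier := S i\<rparr>) \<and>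
            cyclic_group (((GG n E)\<lparr>carrier := S i\<rparr>) Mod S (Suc i))"
    using cs unfolding cyclic_series_def by auto
  have main: "card {j. i \<le> j \<and> j < k \<and> ?inf j} \<le> card (act n E (S i))" if "i \<le> k" for i
    using that
  proof (induction i rule: inc_induct)
    case base
    have e: "{j. k \<le> j \<and> j < k \<and> ?inf j} = {}" by auto
    show ?case unfolding e by simp
  next
    case (step i)
    have sub: "act n E (S (Suc i)) \<subseteq> act n E (S i)" using st[OF step.hyps(2)] act_mono by blast
    have split: "{j. i \<le> j \<and> j < k \<and> ?inf j} = (if ?inf i then {i} else {}) \<union> {j. Suc i \<le> j \<and> j < k \<and> ?inf j}"
      using step.hyps by (auto simp: le_less Suc_le_eq)
    show ?case
    proof (cases "?inf i")
      case True
      have "act n E (S (Suc i)) \<noteq> act n E (S i)"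
      proof
        assume eq: "act n E (S (Suc i)) = act n E (S i)"
        have "\<forall>g\<in>S i. \<exists>m::nat. m > 0 \<and> g [^]\<^bsub>GG n E\<^esub> m \<in> S (Suc i)"
          using torsion[OF sg sg _ _ eq] st[OF step.hyps(2)] step.hyps by auto
        then have "finite (carrier (((GG n E)\<lparr>carrier := S i\<rparr>) Mod S (Suc i)))"
          using quot_finite[OF group_GG sg] st[OF step.hyps(2)] step.hyps by auto
        then show False using True by simp
      qed
      then have "act n E (S (Suc i)) \<subset> act n E (S i)" using sub by blast
      then have lt: "card (act n E (S (Suc i))) < card (act n E (S i))"
        by (rule psubset_card_mono[OF act_finite])
      have "card {j. i \<le> j \<and> j < k \<and> ?inf j} \<le> card {i} + card {j. Suc i \<le> j \<and> j < k \<and> ?inf j}"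
        unfolding split using True card_Un_le by simp
      then show ?thesis using step.IH lt by simp
    next
      case False
      have "card (act n E (S (Suc i))) \<le> card (act n E (S i))"
        by (rule card_mono[OF act_finite sub])
      then show ?thesis using step.IH split False by simp
    qed
  qed
  have "{j. 0 \<le> j \<and> j < k \<and> ?inf j} = {j. j < k \<and> ?inf j}" by simp
  then show ?thesis using main[of 0] S0 unfolding num_infinite_factors_def by simp
qed


lemma series_exists:
  assumes g: "g \<in> carrier (GG n E)"
  shows "cyclic_series (GG n E) (centralizer (GG n E) g) (DD n E)
           (\<lambda>i. centralizer (GG n E) g \<inter> ZZ n E i)"
proof -
  interpret G: group "GG n E" by (rule group_GG)
  let ?C = "centralizer (GG n E) g"
  let ?S = "\<lambda>i. ?C \<inter> ZZ n E i"
  have Csg: "subgroup ?C (GG n E)" by (rule G.centralizer_subgroup[OF g])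
  have Csub: "?C \<subseteq> carrier (GG n E)" unfolding centralizer_def by blast
  have Sg: "subgroup (?S i) (GG n E)" for i by (rule G.subgroups_Inter_pair[OF Csg ZZ_subgroup])
  have S0: "?S 0 = ?C" using Csub by (auto simp: ZZ_0)
  have one: "\<one>\<^bsub>GG n E\<^esub> \<in> ?C" by (rule subgroup.one_closed[OF Csg])
  have SD: "?S (DD n E) = {\<one>\<^bsub>GG n E\<^esub>}" using one by (auto simp: ZZ_DD)
  have step: "?S (Suc i) \<subseteq> ?S i \<and> ?S (Suc i) \<lhd> ((GG n E)\<lparr>carrier := ?S i\<rparr>) \<and>
            cyclic_group (((GG n E)\<lparr>carrier := ?S i\<rparr>) Mod ?S (Suc i))" for i
  proof -
    interpret A: addhom "(GG n E)\<lparr>carrier := ?S i\<rparr>" "cc n E i"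
      by (rule addhom_ZZ[OF Sg]) blast
    have eqS: "?S (Suc i) = {h \<in> carrier ((GG n E)\<lparr>carrier := ?S i\<rparr>). cc n E i h = 0}"
      by (auto simp: ZZ_Suc)
    show ?thesis unfolding eqS using A.addhom_kernel_normal A.addhom_cyclic by auto
  qed
  show ?thesis unfolding cyclic_series_def using S0 SD Sg step by blast
qed

lemma relation:
  assumes sg: "simple_graph n E" and h: "h \<in> centralizer (GG n E) (z, t)"
    and i0: "i0 < n" and j: "j < n" and nE: "\<not> E i0 j"
  shows "fst h j * z i0 = z j * fst h i0"
proof -
  have comm: "h \<otimes>\<^bsub>GG n E\<^esub> (z, t) = (z, t) \<otimes>\<^bsub>GG n E\<^esub> h"
    using h unfolding centralizer_def by blast
  have sn: "snd (h \<otimes>\<^bsub>GG n E\<^esub> (z, t)) p = snd ((z, t) \<otimes>\<^bsub>GG n E\<^esub> h) p" for p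
    using comm by simp
  consider "j = i0" | "i0 < j" | "j < i0" by linarith
  then show ?thesis
  proof cases
    case 1 then show ?thesis by simp
  next
    case 2
    then have "(i0, j) \<in> nonedges n E" using j nE by (simp add: nonedges_def)
    then show ?thesis using sn[of "(i0, j)"] by (simp add: mult_GG)
  next
    case 3
    have "\<not> E j i0" using nE sg unfolding simple_graph_def by blast
    then have "(j, i0) \<in> nonedges n E" using 3 i0 by (simp add: nonedges_def)
    then show ?thesis using sn[of "(j, i0)"] by (simp add: mult_GG algebra_simps)
  qed
qed

lemma act_bound_deg:
  assumes sg: "simple_graph n E" and i0: "i0 < n" and z0: "z i0 \<noteq> 0"
  shows "card (act n E (centralizer (GG n E) (z, t)) \<inter> {..<n}) \<le> vdeg n E i0 + 1"
proof -
  let ?C = "centralizer (GG n E) (z, t)"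
  define P where "P = (\<lambda>j. j < n \<and> \<not> E i0 j \<and> z j \<noteq> 0)"
  have Pi0: "P i0" unfolding P_def using i0 z0 sg unfolding simple_graph_def by blast
  define m0 where "m0 = (LEAST j. P j)"
  have Pm0: "P m0" unfolding m0_def using Pi0 by (rule LeastI)
  have sub: "act n E ?C \<inter> {..<n} \<subseteq> insert m0 {j. j < n \<and> E i0 j}"
  proof
    fix i assume "i \<in> act n E ?C \<inter> {..<n}"
    then have iA: "i \<in> act n E ?C" and "i < n" by auto
    show "i \<in> insert m0 {j. j < n \<and> E i0 j}"
    proof (cases "E i0 i")
      case True then show ?thesis using \<open>i < n\<close> by simp
    next
      case False
      obtain h where h: "h \<in> ?C" "h \<in> ZZ n E i" "cc n E i h \<noteq> 0" using iA by (auto simp: act_def)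
      have hi: "fst h i \<noteq> 0" using h(3) \<open>i < n\<close> by (simp add: cc_def)
      have Ri: "fst h i * z i0 = z i * fst h i0" by (rule relation[OF sg h(1) i0 \<open>i < n\<close> False])
      have zi: "z i \<noteq> 0"
      proof
        assume "z i = 0"
        then have "fst h i * z i0 = 0" using Ri by simp
        then show False using hi z0 by simp
      qed
      then have "P i" unfolding P_def using \<open>i < n\<close> False by simp
      then have le: "m0 \<le> i" unfolding m0_def by (rule Least_le)
      have "\<not> m0 < i"
      proof
        assume lt: "m0 < i"
        have m0n: "m0 < n" and nE0: "\<not> E i0 m0" and zm0: "z m0 \<noteq> 0" using Pm0 unfolding P_def by auto
        have "cc n E m0 h = 0" using h(2) lt unfolding ZZ_def by blast
        then have hm0: "fst h m0 = 0" using m0n by (simp add: cc_def)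
        have "fst h m0 * z i0 = z m0 * fst h i0" by (rule relation[OF sg h(1) i0 m0n nE0])
        then have "fst h i0 = 0" using hm0 zm0 by simp
        then have "fst h i * z i0 = 0" using Ri by simp
        then show False using hi z0 by simp
      qed
      then have "i = m0" using le by simp
      then show ?thesis by simp
    qed
  qed
  have fin: "finite {j. j < n \<and> E i0 j}" by simp
  have "card (act n E ?C \<inter> {..<n}) \<le> card (insert m0 {j. j < n \<and> E i0 j})"
    by (rule card_mono[OF _ sub]) (simp add: fin)
  also have "\<dots> \<le> card {j. j < n \<and> E i0 j} + 1" using fin by (simp add: card_insert_if)
  finally show ?thesis unfolding vdeg_def by simp
qed

lemma act_bound_n: "card (act n E H \<inter> {..<n}) \<le> n"
proof -
  have "card (act n E H \<inter> {..<n}) \<le> card {..<n}" by (rule card_mono) auto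
  then show ?thesis by simp
qed

lemma act_split: "card (act n E H) \<le> card (act n E H \<inter> {..<n}) + card (nonedges n E)"
proof -
  have "act n E H \<subseteq> (act n E H \<inter> {..<n}) \<union> {n..<DD n E}" using act_sub[of n E H] by auto
  then have "card (act n E H) \<le> card ((act n E H \<inter> {..<n}) \<union> {n..<DD n E})"
    by (rule card_mono[rotated]) simp
  also have "\<dots> \<le> card (act n E H \<inter> {..<n}) + card {n..<DD n E}" by (rule card_Un_le)
  also have "card {n..<DD n E} = card (nonedges n E)" by (simp add: DD_def)
  finally show ?thesis .
qed

theorem lemma4p2:
  fixes n :: nat and E :: "nat \<Rightarrow> nat \<Rightarrow> bool"
    and z :: "nat \<Rightarrow> int" and t :: "nat \<times> nat \<Rightarrow> int"
  assumes "simple_graph n E"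
    and "\<forall>i. n \<le> i \<longrightarrow> z i = 0"
    and "\<forall>p. p \<notin> nonedges n E \<longrightarrow> t p = 0"
  shows "(\<exists>k S. cyclic_series (GG n E) (centralizer (GG n E) (z, t)) k S) \<and>
         (\<forall>k S. cyclic_series (GG n E) (centralizer (GG n E) (z, t)) k S \<longrightarrow>
            int (num_infinite_factors (GG n E) k S)
              \<le> (if {i. i < n \<and> z i \<noteq> 0} = {} then int n - 1
                 else min (int n - 1) (int (Min (vdeg n E ` {i. i < n \<and> z i \<noteq> 0}))))
                + int (card (nonedges n E)) + 1)"
proof (intro conjI allI impI)
  have g: "(z, t) \<in> carrier (GG n E)" using assms(2,3) by (simp add: carrier_GG)
  show "\<exists>k S. cyclic_series (GG n E) (centralizer (GG n E) (z, t)) k S"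
    using series_exists[OF g] by blast
next
  fix k S assume cs: "cyclic_series (GG n E) (centralizer (GG n E) (z, t)) k S"
  let ?C = "centralizer (GG n E) (z, t)"
  let ?a = "card (act n E ?C \<inter> {..<n})"
  let ?N = "card (nonedges n E)"
  let ?V = "vdeg n E ` {i. i < n \<and> z i \<noteq> 0}"
  have c1: "num_infinite_factors (GG n E) k S \<le> ?a + ?N"
    using count_le[OF cs] act_split[of n E ?C] by linarith
  have an: "?a \<le> n" by (rule act_bound_n)
  show "int (num_infinite_factors (GG n E) k S)
              \<le> (if {i. i < n \<and> z i \<noteq> 0} = {} then int n - 1
                 else min (int n - 1) (int (Min ?V))) + int ?N + 1"
  proof (cases "{i. i < n \<and> z i \<noteq> 0} = {}")
    case True
    then show ?thesis using c1 an by simp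
  next
    case False
    have "Min ?V \<in> ?V" using False by (intro Min_in) auto
    then obtain i0 where i0: "i0 < n" "z i0 \<noteq> 0" "Min ?V = vdeg n E i0" by auto
    have ad: "?a \<le> vdeg n E i0 + 1" by (rule act_bound_deg[of n E i0 z t, OF assms(1) i0(1,2)])
    have "int ?a \<le> min (int n - 1) (int (Min ?V)) + 1" using ad an i0(3) by (simp add: min_def)
    then show ?thesis unfolding if_not_P[OF False] using c1 by linarith
  qed
qed

end
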